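(* Let $x_i\in\mathbb{R}^p$, $i=1,\dots,n$, be random vectors with common second-moment matrix satisfying $\underline\kappa\le\lambda_{\min}(\mathrm{E}[x_ix_i'])\le\lambda_{\max}(\mathrm{E}[x_ix_i'])\le\bar\kappa$, and let $h_i=x_i'\theta_h+\rho_i$ where $\theta_h\in S^a_A(p)$ and $\mathrm{E}[\rho_i^2]$ does not depend on $i$. For $s=A^{1/a}n^{1/(2a)}$ with $a>1$, define $\beta_{h0}\in\arg\min_{\|\beta\|_0\le s}\mathrm{E}[(h_i-x_i'\beta)^2]$ and $r_{hi}=h_i-x_i'\beta_{h0}$, $i=1,\dots,n$. Then $$|r_{hi}|\le\|x_i\|_\infty(\bar\kappa/\underline\kappa)^{3/2}\left\{\frac{2a-1}{a-1}\sqrt{s^2/n}+5\sqrt{s\,\mathrm{E}[\rho_i^2]/\underline\kappa}\right\}+|\rho_i|.$$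
   Context: For constants $a>0$, $A>0$, a coefficient vector $\theta=(\theta_j)$ is "$a$-smooth with constant $A$ after $p$-rearrangement", written $\theta\in S^a_A(p)$, if $|\theta_{(j)}|\le Aj^{-a}$ for $j=1,\dots,p$ (and $|\theta_j|\le Aj^{-a}$ for $j>p$ if $\theta$ has further coordinates), where $|\theta_{(1)}|\ge|\theta_{(2)}|\ge\dots\ge|\theta_{(p)}|$ is the decreasing rearrangement of $|\theta_1|,\dots,|\theta_p|$. Here $\theta_h$ is paired with $x_i\in\mathbb{R}^p$, so it is regarded as a vector in $\mathbb{R}^p$. $\|\beta\|_0$ is the number of nonzero entries and $\|\cdot\|_\infty$ the max-norm; $\lambda_{\min},\lambda_{\max}$ are the smallest and largest eigenvalues. *)

theory Defs
  imports "HOL-Probability.Probability"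
begin

text \<open>Vectors in R^p are represented as functions nat => real; only the coordinates
  0..p-1 are relevant (coordinate j of the paper corresponds to index j-1).\<close>

definition dotp :: "nat \<Rightarrow> (nat \<Rightarrow> real) \<Rightarrow> (nat \<Rightarrow> real) \<Rightarrow> real" where
  "dotp p u v = (\<Sum>j<p. u j * v j)"

definition l0norm :: "nat \<Rightarrow> (nat \<Rightarrow> real) \<Rightarrow> nat" where
  "l0norm p v = card {j. j < p \<and> v j \<noteq> 0}"

definition supnorm :: "nat \<Rightarrow> (nat \<Rightarrow> real) \<Rightarrow> real" where
  "supnorm p v = (if p = 0 then 0 else Max ((\<lambda>j. \<bar>v j\<bar>) ` {..<p}))"

text \<open>Decreasing rearrangement of |theta_1|,...,|theta_p|: element k (0-based)
  is |theta_(k+1)|.\<close>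
definition decr_rearr :: "nat \<Rightarrow> (nat \<Rightarrow> real) \<Rightarrow> real list" where
  "decr_rearr p \<theta> = rev (sort (map (\<lambda>j. \<bar>\<theta> j\<bar>) [0..<p]))"

definition smooth_class :: "real \<Rightarrow> real \<Rightarrow> nat \<Rightarrow> (nat \<Rightarrow> real) set" where
  "smooth_class a A p = {\<theta>. \<forall>k<p. decr_rearr p \<theta> ! k \<le> A * real (k + 1) powr (- a)}"

definition is_eigenvalue :: "nat \<Rightarrow> (nat \<Rightarrow> nat \<Rightarrow> real) \<Rightarrow> real \<Rightarrow> bool" where
  "is_eigenvalue p S \<mu> \<longleftrightarrow>
     (\<exists>v. (\<exists>j<p. v j \<noteq> 0) \<and> (\<forall>j<p. (\<Sum>k<p. S j k * v k) = \<mu> * v j))"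

end

theory Submission
  imports Defs "HOL-Combinatorics.Permutations"
begin

definition Qf :: "nat \<Rightarrow> (nat \<Rightarrow> nat \<Rightarrow> real) \<Rightarrow> (nat \<Rightarrow> real) \<Rightarrow> real" where
  "Qf p S v = (\<Sum>j<p. \<Sum>k<p. S j k * v j * v k)"

definition n2 :: "nat \<Rightarrow> (nat \<Rightarrow> real) \<Rightarrow> real" where
  "n2 p v = (\<Sum>j<p. (v j)\<^sup>2)"

lemma compact_sphere_fun:
  "compact {v::nat\<Rightarrow>real. (\<forall>j. p \<le> j \<longrightarrow> v j = 0) \<and> n2 p v = 1}"
proof -
  define B where "B = PiE UNIV (\<lambda>j. if j<p then {-1..1::real} else {0})"
  have "compactin (product_topology (\<lambda>_. euclidean) UNIV) B"
    unfolding B_def by (subst compactin_PiE) auto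
  hence cB: "compact B" by (simp add: euclidean_product_topology)
  have cl1: "closed {v::nat\<Rightarrow>real. \<forall>j. p \<le> j \<longrightarrow> v j = 0}"
  proof -
    have "{v::nat\<Rightarrow>real. \<forall>j. p \<le> j \<longrightarrow> v j = 0} = (\<Inter>j\<in>{p..}. {v. v j = 0})" by auto
    moreover have "closed {v::nat\<Rightarrow>real. v j = 0}" for j
      by (rule closed_Collect_eq) (auto intro: continuous_intros)
    ultimately show ?thesis by auto
  qed
  have cl2: "closed {v::nat\<Rightarrow>real. n2 p v = 1}"
    unfolding n2_def
    by (rule closed_Collect_eq) (auto intro!: continuous_intros continuous_on_compose2[OF continuous_on_product_coordinates])
  have sub: "{v::nat\<Rightarrow>real. (\<forall>j. p \<le> j \<longrightarrow> v j = 0) \<and> n2 p v = 1} = B \<inter> ({v. \<forall>j. p \<le> j \<longrightarrow> v j = 0} \<inter> {v. n2 p v = 1})"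
  proof (auto simp: B_def)
    fix v :: "nat \<Rightarrow> real" and j assume z: "\<forall>j\<ge>p. v j = 0" and n: "n2 p v = 1" and j: "j < p"
    have "(v j)\<^sup>2 \<le> n2 p v" unfolding n2_def
      by (rule member_le_sum) (use j in auto)
    hence "(v j)\<^sup>2 \<le> 1" using n by simp
    hence "\<bar>v j\<bar> \<le> 1" using abs_square_le_1[of "v j"] by auto
    thus "- 1 \<le> v j" "v j \<le> 1" by auto
  qed
  show ?thesis unfolding sub using cB cl1 cl2 by (intro compact_Int_closed closed_Int)
qed

lemma Qf_cont: "continuous_on A (Qf p S)"
proof -
  have c: "\<And>j. continuous_on A (\<lambda>v::nat\<Rightarrow>real. v j)"
    by (rule continuous_on_subset[OF continuous_on_product_coordinates]) auto
  have "continuous_on A (\<lambda>v. \<Sum>j<p. \<Sum>k<p. S j k * v j * v k)"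
    by (intro continuous_on_sum continuous_on_mult continuous_on_const c)
  thus ?thesis by (simp add: Qf_def[abs_def])
qed

lemma quad_zero:
  fixes \<alpha> \<beta> :: real
  assumes "\<And>t. \<alpha> * t + \<beta> * t\<^sup>2 \<ge> 0"
  shows "\<alpha> = 0"
proof -
  define t where "t = - \<alpha> / (\<bar>\<beta>\<bar> + 1)"
  have pos: "\<bar>\<beta>\<bar> + 1 > 0" by simp
  have "\<alpha> * t + \<beta> * t\<^sup>2 \<ge> 0" by (rule assms)
  hence "(\<alpha> * t + \<beta> * t\<^sup>2) * (\<bar>\<beta>\<bar> + 1)\<^sup>2 \<ge> 0" by simp
  moreover have "(\<alpha> * t + \<beta> * t\<^sup>2) * (\<bar>\<beta>\<bar> + 1)\<^sup>2 = \<alpha>\<^sup>2 * (\<beta> - \<bar>\<beta>\<bar> - 1)"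
  proof -
    have tD: "t * (\<bar>\<beta>\<bar> + 1) = - \<alpha>" unfolding t_def using pos by simp
    have "(\<alpha> * t + \<beta> * t\<^sup>2) * (\<bar>\<beta>\<bar> + 1)\<^sup>2
        = \<alpha> * (t * (\<bar>\<beta>\<bar> + 1)) * (\<bar>\<beta>\<bar> + 1) + \<beta> * (t * (\<bar>\<beta>\<bar> + 1))\<^sup>2"
      by (simp add: power2_eq_square algebra_simps)
    also have "\<dots> = \<alpha>\<^sup>2 * (\<beta> - \<bar>\<beta>\<bar> - 1)"
      unfolding tD by (simp add: power2_eq_square algebra_simps)
    finally show ?thesis .
  qed
  ultimately have "\<alpha>\<^sup>2 * (\<beta> - \<bar>\<beta>\<bar> - 1) \<ge> 0" by simp
  moreover have neg: "\<beta> - \<bar>\<beta>\<bar> - 1 < 0" by simp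
  moreover have "\<alpha>\<^sup>2 * (\<beta> - \<bar>\<beta>\<bar> - 1) \<le> 0"
    using neg by (intro mult_nonneg_nonpos) auto
  ultimately have "\<alpha>\<^sup>2 * (\<beta> - \<bar>\<beta>\<bar> - 1) = 0" by linarith
  thus ?thesis using neg by simp
qed

lemma Qf_scale: "Qf p S (\<lambda>j. c * v j) = c\<^sup>2 * Qf p S v"
  unfolding Qf_def by (simp add: sum_distrib_left power2_eq_square algebra_simps)

lemma n2_scale: "n2 p (\<lambda>j. c * v j) = c\<^sup>2 * n2 p v"
  unfolding n2_def by (simp add: sum_distrib_left power2_eq_square algebra_simps)

lemma sum_e:
  assumes "j < (p::nat)"
  shows "(\<Sum>i<p. (if i = j then 1 else 0) * g i) = (g j :: real)"
proof -
  have "(\<Sum>i<p. (if i = j then 1 else 0) * g i) = (\<Sum>i<p. if i = j then g i else 0)"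
    by (intro sum.cong) auto
  thus ?thesis using assms by simp
qed

lemma Qf_add_e:
  assumes sym: "\<forall>j<p. \<forall>k<p. S j k = S k j" and j: "j < p"
  shows "Qf p S (\<lambda>i. v i + t * (if i = j then 1 else 0))
     = Qf p S v + 2 * t * (\<Sum>k<p. S j k * v k) + t\<^sup>2 * S j j"
proof -
  define e where "e = (\<lambda>i::nat. if i = j then (1::real) else 0)"
  have se: "(\<Sum>i<p. e i * g i) = g j" for g using sum_e[OF j] unfolding e_def .
  have "Qf p S (\<lambda>i. v i + t * e i)
     = (\<Sum>i<p. \<Sum>k<p. S i k * v i * v k) + t * (\<Sum>i<p. \<Sum>k<p. S i k * v i * e k)
       + t * (\<Sum>i<p. \<Sum>k<p. S i k * e i * v k)
       + t\<^sup>2 * (\<Sum>i<p. \<Sum>k<p. S i k * e i * e k)"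
    unfolding Qf_def by (simp add: algebra_simps sum.distrib sum_distrib_left power2_eq_square)
  also have "(\<Sum>i<p. \<Sum>k<p. S i k * v i * e k) = (\<Sum>k<p. e k * (\<Sum>i<p. S i k * v i))"
    by (subst sum.swap) (simp add: sum_distrib_left algebra_simps)
  also have "(\<Sum>k<p. e k * (\<Sum>i<p. S i k * v i)) = (\<Sum>i<p. S i j * v i)" by (rule se)
  also have "(\<Sum>i<p. \<Sum>k<p. S i k * e i * v k) = (\<Sum>i<p. e i * (\<Sum>k<p. S i k * v k))"
    by (simp add: sum_distrib_left algebra_simps)
  also have "(\<Sum>i<p. \<Sum>k<p. S i k * e i * e k) = (\<Sum>i<p. e i * (\<Sum>k<p. e k * S i k))"
    by (simp add: sum_distrib_left algebra_simps)
  also have "(\<Sum>i<p. S i j * v i) = (\<Sum>k<p. S j k * v k)"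
    using sym j by (intro sum.cong) auto
  also have "(\<Sum>i<p. e i * (\<Sum>k<p. S i k * v k)) = (\<Sum>k<p. S j k * v k)" by (rule se)
  also have "(\<Sum>i<p. e i * (\<Sum>k<p. e k * S i k)) = S j j" by (simp add: se)
  finally show ?thesis unfolding Qf_def e_def by simp
qed

lemma n2_add_e:
  assumes j: "j < p"
  shows "n2 p (\<lambda>i. v i + t * (if i = j then 1 else 0)) = n2 p v + 2 * t * v j + t\<^sup>2"
proof -
  define e where "e = (\<lambda>i::nat. if i = j then (1::real) else 0)"
  have se: "(\<Sum>i<p. e i * g i) = g j" for g using sum_e[OF j] unfolding e_def .
  have ee: "e i * e i = e i" for i by (simp add: e_def)
  have "n2 p (\<lambda>i. v i + t * e i) = (\<Sum>i<p. (v i)\<^sup>2) + 2 * t * (\<Sum>i<p. e i * v i) + t\<^sup>2 * (\<Sum>i<p. e i * 1)"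
    unfolding n2_def by (simp add: power2_eq_square algebra_simps sum.distrib sum_distrib_left ee)
  also have "\<dots> = n2 p v + 2 * t * v j + t\<^sup>2" by (simp only: se n2_def)
  finally show ?thesis unfolding e_def .
qed

lemma rayleigh_min:
  assumes p: "p \<ge> 1" and sym: "\<forall>j<p. \<forall>k<p. S j k = S k j"
  shows "\<exists>\<mu>. is_eigenvalue p S \<mu> \<and> (\<forall>v. \<mu> * n2 p v \<le> Qf p S v)"
proof -
  define C where "C = {v::nat\<Rightarrow>real. (\<forall>j. p \<le> j \<longrightarrow> v j = 0) \<and> n2 p v = 1}"
  have cC: "compact C" unfolding C_def by (rule compact_sphere_fun)
  have "n2 p (\<lambda>j. if j = 0 then 1 else 0) = (\<Sum>j<p. if j = 0 then 1 else (0::real))"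
    unfolding n2_def by (intro sum.cong) auto
  also have "\<dots> = 1" using p by simp
  finally have "(\<lambda>j. if j = 0 then 1 else 0) \<in> C"
    using p by (simp add: C_def)
  hence ne: "C \<noteq> {}" by auto
  obtain v0 where v0C: "v0 \<in> C" and v0min: "\<forall>y\<in>C. Qf p S v0 \<le> Qf p S y"
    using continuous_attains_inf[OF cC ne Qf_cont] by blast
  define \<mu> where "\<mu> = Qf p S v0"
  have n2v0: "n2 p v0 = 1" using v0C by (simp add: C_def)
  have claim1: "\<mu> * n2 p v \<le> Qf p S v" for v
  proof -
    define w where "w = (\<lambda>j. if j < p then v j else 0)"
    have Qw: "Qf p S w = Qf p S v" unfolding Qf_def w_def by (intro sum.cong) auto
    have nw: "n2 p w = n2 p v" unfolding n2_def w_def by (intro sum.cong) auto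
    show ?thesis
    proof (cases "n2 p v = 0")
      case True
      hence "\<forall>j\<in>{..<p}. (v j)\<^sup>2 = 0" unfolding n2_def by (subst (asm) sum_nonneg_eq_0_iff) auto
      hence "Qf p S v = 0" unfolding Qf_def by simp
      thus ?thesis using True by simp
    next
      case False
      have nn: "n2 p v \<ge> 0" unfolding n2_def by (simp add: sum_nonneg)
      hence np: "n2 p v > 0" using False by simp
      define c where "c = 1 / sqrt (n2 p v)"
      have c2: "c\<^sup>2 = 1 / n2 p v" unfolding c_def using nn by (simp add: power_divide)
      have "(\<lambda>j. c * w j) \<in> C" unfolding C_def using c2 nw np
        by (auto simp: n2_scale w_def)
      hence "\<mu> \<le> Qf p S (\<lambda>j. c * w j)" using v0min \<mu>_def by auto
      also have "\<dots> = Qf p S v / n2 p v" using c2 Qw by (simp add: Qf_scale)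
      finally show ?thesis using np by (simp add: pos_le_divide_eq mult.commute)
    qed
  qed
  have eig: "(\<Sum>k<p. S j k * v0 k) = \<mu> * v0 j" if j: "j < p" for j
  proof -
    have "2 * ((\<Sum>k<p. S j k * v0 k) - \<mu> * v0 j) * t + (S j j - \<mu>) * t\<^sup>2 \<ge> 0" for t
    proof -
      have "\<mu> * n2 p (\<lambda>i. v0 i + t * (if i = j then 1 else 0)) \<le> Qf p S (\<lambda>i. v0 i + t * (if i = j then 1 else 0))"
        by (rule claim1)
      thus ?thesis unfolding Qf_add_e[OF sym j] n2_add_e[OF j] n2v0 \<mu>_def[symmetric]
        by (simp add: algebra_simps)
    qed
    hence "2 * ((\<Sum>k<p. S j k * v0 k) - \<mu> * v0 j) = 0" by (rule quad_zero)
    thus ?thesis by simp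
  qed
  have nz: "\<exists>j<p. v0 j \<noteq> 0"
  proof (rule ccontr)
    assume "\<not> ?thesis"
    hence "n2 p v0 = 0" unfolding n2_def by simp
    thus False using n2v0 by simp
  qed
  have "is_eigenvalue p S \<mu>" unfolding is_eigenvalue_def using nz eig by blast
  thus ?thesis using claim1 by blast
qed

lemma powr_step:
  fixes b y :: real
  assumes b: "b > 1" and y: "y > 0"
  shows "(b - 1) * (y + 1) powr (- b) \<le> y powr (1 - b) - (y + 1) powr (1 - b)"
proof -
  have der: "DERIV (\<lambda>x. x powr (1 - b)) x :> (1 - b) * x powr (- b)" if "y \<le> x" "x \<le> y + 1" for x
  proof -
    have "x > 0" using that y by simp
    from DERIV_fun_powr[OF DERIV_ident this, of "1 - b"]
    show ?thesis by simp
  qed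
  obtain z where z: "y < z" "z < y + 1"
    and eq: "(y + 1) powr (1 - b) - y powr (1 - b) = (y + 1 - y) * ((1 - b) * z powr (- b))"
    using MVT2[of y "y + 1" "\<lambda>x. x powr (1 - b)" "\<lambda>x. (1 - b) * x powr (- b)"] der by auto
  have "(y + 1) powr (- b) \<le> z powr (- b)"
    using z y b by (intro powr_mono2') auto
  hence "(b - 1) * (y + 1) powr (- b) \<le> (b - 1) * z powr (- b)"
    using b by (intro mult_left_mono) auto
  also have "\<dots> = y powr (1 - b) - (y + 1) powr (1 - b)" using eq by (simp add: algebra_simps)
  finally show ?thesis .
qed

lemma tail_sum_aux:
  fixes b :: real
  assumes b: "b > 1" and N: "N \<ge> Suc m"
  shows "(\<Sum>k\<in>{m..<N}. (real k + 1) powr (- b))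
     \<le> (real m + 1) powr (- b) + ((real m + 1) powr (1 - b) - real N powr (1 - b)) / (b - 1)"
  using N
proof (induction N rule: dec_induct)
  case base
  then show ?case by (simp add: add.commute)
next
  case (step N)
  have Npos: "real N > 0" using step.hyps by simp
  have "(\<Sum>k\<in>{m..<Suc N}. (real k + 1) powr (- b)) = (\<Sum>k\<in>{m..<N}. (real k + 1) powr (- b)) + (real N + 1) powr (- b)"
    using step.hyps by simp
  also have "\<dots> \<le> (real m + 1) powr (- b) + ((real m + 1) powr (1 - b) - real N powr (1 - b)) / (b - 1)
       + (real N powr (1 - b) - (real N + 1) powr (1 - b)) / (b - 1)"
  proof -
    have "(b - 1) * (real N + 1) powr (- b) \<le> real N powr (1 - b) - (real N + 1) powr (1 - b)"
      by (rule powr_step[OF b Npos])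
    hence "(real N + 1) powr (- b) \<le> (real N powr (1 - b) - (real N + 1) powr (1 - b)) / (b - 1)"
      using b by (simp add: pos_le_divide_eq mult.commute)
    thus ?thesis using step.IH by linarith
  qed
  also have "\<dots> = (real m + 1) powr (- b) + ((real m + 1) powr (1 - b) - real (Suc N) powr (1 - b)) / (b - 1)"
    by (simp add: diff_divide_distrib add.commute)
  finally show ?case .
qed

lemma tail_sum:
  fixes b :: real
  assumes b: "b > 1"
  shows "(\<Sum>k\<in>{m..<N}. (real k + 1) powr (- b))
     \<le> (real m + 1) powr (- b) + (real m + 1) powr (1 - b) / (b - 1)"
proof (cases "N \<ge> Suc m")
  case True
  have "(\<Sum>k\<in>{m..<N}. (real k + 1) powr (- b))
     \<le> (real m + 1) powr (- b) + ((real m + 1) powr (1 - b) - real N powr (1 - b)) / (b - 1)"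
    by (rule tail_sum_aux[OF b True])
  also have "\<dots> \<le> (real m + 1) powr (- b) + (real m + 1) powr (1 - b) / (b - 1)"
    using b by (intro add_left_mono divide_right_mono) auto
  finally show ?thesis .
next
  case False
  hence "{m..<N} = {}" by auto
  thus ?thesis using b by (simp add: add_nonneg_nonneg)
qed

lemma perm_top:
  assumes th: "\<theta> \<in> smooth_class a A p"
  shows "\<exists>T. T \<subseteq> {..<p} \<and> card T \<le> m
     \<and> (\<Sum>j\<in>{..<p}-T. \<bar>\<theta> j\<bar>) \<le> (\<Sum>k\<in>{m..<p}. A * (real k + 1) powr (- a))
     \<and> (\<Sum>j\<in>{..<p}-T. (\<theta> j)\<^sup>2) \<le> (\<Sum>k\<in>{m..<p}. (A * (real k + 1) powr (- a))\<^sup>2)"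
proof -
  define g where "g = (\<lambda>j. \<bar>\<theta> j\<bar>)"
  define L where "L = decr_rearr p \<theta>"
  have ms: "mset L = mset (map g [0..<p])" by (simp add: L_def decr_rearr_def g_def)
  obtain f where f: "f permutes {..<length (map g [0..<p])}" and fL: "permute_list f (map g [0..<p]) = L"
    using mset_eq_permutation[OF ms] by blast
  have fp: "f permutes {..<p}" using f by simp
  have Lk: "L ! k = \<bar>\<theta> (f k)\<bar>" if "k < p" for k
  proof -
    have "permute_list f (map g [0..<p]) ! k = map g [0..<p] ! f k"
      by (rule permute_list_nth[OF f]) (use that in simp)
    hence "L ! k = map g [0..<p] ! f k" by (simp only: fL)
    moreover have "f k < p" using permutes_in_image[OF fp] that by simp
    ultimately show ?thesis by (simp add: g_def)
  qed
  have bnd: "\<bar>\<theta> (f k)\<bar> \<le> A * (real k + 1) powr (- a)" if "k < p" for k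
  proof -
    have "L ! k \<le> A * real (k + 1) powr (- a)" using th that unfolding smooth_class_def L_def by blast
    moreover have "real (k + 1) = real k + 1" by simp
    ultimately show ?thesis using Lk[OF that] by metis
  qed
  define m' where "m' = min m p"
  define T where "T = f ` {..<m'}"
  have inj: "inj f" using permutes_inj[OF fp] .
  have T1: "T \<subseteq> {..<p}"
  proof
    fix x assume "x \<in> T"
    then obtain k where k: "k < m'" "x = f k" unfolding T_def by auto
    hence "k < p" unfolding m'_def by simp
    thus "x \<in> {..<p}" using k permutes_in_image[OF fp, of k] by simp
  qed
  have "card T \<le> card {..<m'}" unfolding T_def by (rule card_image_le) simp
  hence T2: "card T \<le> m" unfolding m'_def by simp
  have diff: "{..<p} - T = f ` {m'..<p}"
  proof -
    have "{..<p} - T = f ` {..<p} - f ` {..<m'}" unfolding T_def using permutes_image[OF fp] by simp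
    also have "\<dots> = f ` ({..<p} - {..<m'})" by (rule image_set_diff[OF inj, symmetric])
    also have "{..<p} - {..<m'} = {m'..<p}" by auto
    finally show ?thesis .
  qed
  have mm: "{m'..<p} = {m..<p}" unfolding m'_def by auto
  have inj': "inj_on f {m'..<p}" using inj by (simp add: inj_on_def inj_def)
  have s1: "(\<Sum>j\<in>{..<p}-T. \<bar>\<theta> j\<bar>) = (\<Sum>k\<in>{m..<p}. \<bar>\<theta> (f k)\<bar>)"
    unfolding diff by (subst sum.reindex[OF inj']) (simp_all add: mm)
  have s2: "(\<Sum>j\<in>{..<p}-T. (\<theta> j)\<^sup>2) = (\<Sum>k\<in>{m..<p}. (\<theta> (f k))\<^sup>2)"
    unfolding diff by (subst sum.reindex[OF inj']) (simp_all add: mm)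
  have b1: "(\<Sum>k\<in>{m..<p}. \<bar>\<theta> (f k)\<bar>) \<le> (\<Sum>k\<in>{m..<p}. A * (real k + 1) powr (- a))"
    by (intro sum_mono bnd) auto
  have b2: "(\<Sum>k\<in>{m..<p}. (\<theta> (f k))\<^sup>2) \<le> (\<Sum>k\<in>{m..<p}. (A * (real k + 1) powr (- a))\<^sup>2)"
  proof (intro sum_mono)
    fix k assume "k \<in> {m..<p}"
    hence "\<bar>\<theta> (f k)\<bar> \<le> A * (real k + 1) powr (- a)" by (intro bnd) auto
    hence "\<bar>\<theta> (f k)\<bar>\<^sup>2 \<le> (A * (real k + 1) powr (- a))\<^sup>2" by (intro power_mono) auto
    thus "(\<theta> (f k))\<^sup>2 \<le> (A * (real k + 1) powr (- a))\<^sup>2" by simp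
  qed
  show ?thesis using T1 T2 s1 s2 b1 b2 by (intro exI[of _ T]) auto
qed

lemma abs_prod_le: "\<bar>a * b\<bar> \<le> a\<^sup>2 + (b::real)\<^sup>2"
proof -
  have "0 \<le> (\<bar>a\<bar> - \<bar>b\<bar>)\<^sup>2" by simp
  hence "2 * (\<bar>a\<bar> * \<bar>b\<bar>) \<le> \<bar>a\<bar>\<^sup>2 + \<bar>b\<bar>\<^sup>2" by (simp add: power2_eq_square algebra_simps)
  moreover have "0 \<le> \<bar>a\<bar> * \<bar>b\<bar>" by simp
  ultimately have "\<bar>a\<bar> * \<bar>b\<bar> \<le> \<bar>a\<bar>\<^sup>2 + \<bar>b\<bar>\<^sup>2" by linarith
  thus ?thesis by (simp add: abs_mult)
qed

lemma L2_prod: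
  fixes f g :: "'a \<Rightarrow> real"
  assumes "f \<in> borel_measurable M" "g \<in> borel_measurable M"
    "integrable M (\<lambda>x. (f x)\<^sup>2)" "integrable M (\<lambda>x. (g x)\<^sup>2)"
  shows "integrable M (\<lambda>x. f x * g x)"
proof (rule Bochner_Integration.integrable_bound[where f="\<lambda>x. (f x)\<^sup>2 + (g x)\<^sup>2"])
  show "integrable M (\<lambda>x. (f x)\<^sup>2 + (g x)\<^sup>2)" using assms(3,4) by (rule Bochner_Integration.integrable_add)
  show "(\<lambda>x. f x * g x) \<in> borel_measurable M" using assms(1,2) by (rule borel_measurable_times)
  show "AE x in M. norm (f x * g x) \<le> norm ((f x)\<^sup>2 + (g x)\<^sup>2)"
    by (intro AE_I2) (simp add: abs_prod_le)
qed

lemma quad_cs: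
  fixes a b c :: real
  assumes a: "a \<ge> 0" and q: "\<And>t. 0 \<le> a * t\<^sup>2 + 2 * b * t + c"
  shows "b\<^sup>2 \<le> a * c"
proof (cases "a = 0")
  case True
  show ?thesis
  proof (cases "b = 0")
    case False
    have "0 \<le> a * (-(\<bar>c\<bar> + 1) / (2 * b))\<^sup>2 + 2 * b * (-(\<bar>c\<bar> + 1) / (2 * b)) + c" by (rule q)
    also have "\<dots> = - (\<bar>c\<bar> + 1) + c" using True False by simp
    finally show ?thesis by simp
  qed (use True in simp)
next
  case False
  hence ap: "a > 0" using a by simp
  have "0 \<le> a * (- b / a)\<^sup>2 + 2 * b * (- b / a) + c" by (rule q)
  also have "\<dots> = c - b\<^sup>2 / a" using ap by (simp add: power2_eq_square field_simps)
  finally have "b\<^sup>2 / a \<le> c" by simp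
  thus ?thesis using ap by (simp add: pos_divide_le_eq mult.commute)
qed

lemma quad_expand:
  fixes X :: "'a \<Rightarrow> nat \<Rightarrow> real" and R :: "'a \<Rightarrow> real"
  assumes xm: "\<forall>j<p. (\<lambda>\<omega>. X \<omega> j) \<in> borel_measurable M \<and> integrable M (\<lambda>\<omega>. (X \<omega> j)\<^sup>2)"
      and rm: "R \<in> borel_measurable M" "integrable M (\<lambda>\<omega>. (R \<omega>)\<^sup>2)"
      and S: "\<forall>j<p. \<forall>k<p. S j k = (\<integral>\<omega>. X \<omega> j * X \<omega> k \<partial>M)"
  shows "\<bar>(\<integral>\<omega>. (dotp p (X \<omega>) v + R \<omega>)\<^sup>2 \<partial>M) - (Qf p S v + (\<integral>\<omega>. (R \<omega>)\<^sup>2 \<partial>M))\<bar>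
           \<le> 2 * sqrt (Qf p S v) * sqrt (\<integral>\<omega>. (R \<omega>)\<^sup>2 \<partial>M)
         \<and> Qf p S v \<ge> 0"
proof -
  define Xv where "Xv = (\<lambda>\<omega>. dotp p (X \<omega>) v)"
  have iXX: "integrable M (\<lambda>\<omega>. X \<omega> j * X \<omega> k)" if "j < p" "k < p" for j k
    using xm that by (intro L2_prod) auto
  have iXR: "integrable M (\<lambda>\<omega>. X \<omega> j * R \<omega>)" if "j < p" for j
    using xm rm that by (intro L2_prod) auto
  have sq: "(Xv \<omega>)\<^sup>2 = (\<Sum>j<p. \<Sum>k<p. (v j * v k) * (X \<omega> j * X \<omega> k))" for \<omega>
    unfolding Xv_def dotp_def power2_eq_square sum_product by (simp add: algebra_simps)
  have iXv2: "integrable M (\<lambda>\<omega>. (Xv \<omega>)\<^sup>2)"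
    unfolding sq using iXX by (intro Bochner_Integration.integrable_sum Bochner_Integration.integrable_mult_right) auto
  have a_eq: "(\<integral>\<omega>. (Xv \<omega>)\<^sup>2 \<partial>M) = Qf p S v"
  proof -
    have "(\<integral>\<omega>. (Xv \<omega>)\<^sup>2 \<partial>M) = (\<Sum>j<p. \<Sum>k<p. (v j * v k) * (\<integral>\<omega>. X \<omega> j * X \<omega> k \<partial>M))"
    proof -
      have i1: "integrable M (\<lambda>\<omega>. \<Sum>k<p. v j * v k * (X \<omega> j * X \<omega> k))" if "j < p" for j
        using iXX that by (intro Bochner_Integration.integrable_sum Bochner_Integration.integrable_mult_right) auto
      have "(\<integral>\<omega>. (Xv \<omega>)\<^sup>2 \<partial>M) = (\<Sum>j<p. (\<integral>\<omega>. (\<Sum>k<p. v j * v k * (X \<omega> j * X \<omega> k)) \<partial>M))"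
        unfolding sq by (rule Bochner_Integration.integral_sum[of "{..<p}" M "\<lambda>j \<omega>. \<Sum>k<p. v j * v k * (X \<omega> j * X \<omega> k)"]) (use i1 in auto)
      also have "\<dots> = (\<Sum>j<p. \<Sum>k<p. (v j * v k) * (\<integral>\<omega>. X \<omega> j * X \<omega> k \<partial>M))"
      proof (intro sum.cong refl)
        fix j assume j: "j \<in> {..<p}"
        have "(\<integral>\<omega>. (\<Sum>k<p. v j * v k * (X \<omega> j * X \<omega> k)) \<partial>M) = (\<Sum>k<p. (\<integral>\<omega>. v j * v k * (X \<omega> j * X \<omega> k) \<partial>M))"
          by (rule Bochner_Integration.integral_sum[of "{..<p}" M "\<lambda>k \<omega>. v j * v k * (X \<omega> j * X \<omega> k)"]) (use iXX j in auto)
        also have "\<dots> = (\<Sum>k<p. (v j * v k) * (\<integral>\<omega>. X \<omega> j * X \<omega> k \<partial>M))"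
          by (intro sum.cong refl) (rule integral_mult_right_zero)
        finally show "(\<integral>\<omega>. (\<Sum>k<p. v j * v k * (X \<omega> j * X \<omega> k)) \<partial>M) = (\<Sum>k<p. (v j * v k) * (\<integral>\<omega>. X \<omega> j * X \<omega> k \<partial>M))" .
      qed
      finally show ?thesis .
    qed
    also have "\<dots> = Qf p S v" unfolding Qf_def using S by (intro sum.cong refl) (simp add: algebra_simps)
    finally show ?thesis .
  qed
  have xr: "Xv \<omega> * R \<omega> = (\<Sum>j<p. v j * (X \<omega> j * R \<omega>))" for \<omega>
    unfolding Xv_def dotp_def sum_distrib_right by (simp add: algebra_simps)
  have iXvR: "integrable M (\<lambda>\<omega>. Xv \<omega> * R \<omega>)"
    unfolding xr using iXR by (intro Bochner_Integration.integrable_sum Bochner_Integration.integrable_mult_right) auto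
  define a where "a = (\<integral>\<omega>. (Xv \<omega>)\<^sup>2 \<partial>M)"
  define b where "b = (\<integral>\<omega>. Xv \<omega> * R \<omega> \<partial>M)"
  define c where "c = (\<integral>\<omega>. (R \<omega>)\<^sup>2 \<partial>M)"
  have expand: "(\<integral>\<omega>. (t * Xv \<omega> + R \<omega>)\<^sup>2 \<partial>M) = a * t\<^sup>2 + 2 * b * t + c" for t
  proof -
    have e: "(t * Xv \<omega> + R \<omega>)\<^sup>2 = t\<^sup>2 * (Xv \<omega>)\<^sup>2 + (2 * t) * (Xv \<omega> * R \<omega>) + (R \<omega>)\<^sup>2" for \<omega>
      by (simp add: power2_eq_square algebra_simps)
    have i1: "integrable M (\<lambda>\<omega>. t\<^sup>2 * (Xv \<omega>)\<^sup>2)" using iXv2 by simp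
    have i2: "integrable M (\<lambda>\<omega>. (2 * t) * (Xv \<omega> * R \<omega>))" using iXvR by simp
    have "(\<integral>\<omega>. (t * Xv \<omega> + R \<omega>)\<^sup>2 \<partial>M)
       = (\<integral>\<omega>. t\<^sup>2 * (Xv \<omega>)\<^sup>2 + (2 * t) * (Xv \<omega> * R \<omega>) \<partial>M) + (\<integral>\<omega>. (R \<omega>)\<^sup>2 \<partial>M)"
      unfolding e by (rule Bochner_Integration.integral_add[OF Bochner_Integration.integrable_add[OF i1 i2] rm(2)])
    also have "(\<integral>\<omega>. t\<^sup>2 * (Xv \<omega>)\<^sup>2 + (2 * t) * (Xv \<omega> * R \<omega>) \<partial>M)
       = (\<integral>\<omega>. t\<^sup>2 * (Xv \<omega>)\<^sup>2 \<partial>M) + (\<integral>\<omega>. (2 * t) * (Xv \<omega> * R \<omega>) \<partial>M)"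
      by (rule Bochner_Integration.integral_add[OF i1 i2])
    finally show ?thesis unfolding a_def b_def c_def integral_mult_right_zero
      by (simp add: algebra_simps)
  qed
  have a0: "a \<ge> 0" unfolding a_def by (intro integral_nonneg_AE) auto
  have c0: "c \<ge> 0" unfolding c_def by (intro integral_nonneg_AE) auto
  have "b\<^sup>2 \<le> a * c"
  proof (rule quad_cs[OF a0])
    fix t show "0 \<le> a * t\<^sup>2 + 2 * b * t + c" unfolding expand[symmetric]
      by (intro integral_nonneg_AE) auto
  qed
  hence "sqrt (b\<^sup>2) \<le> sqrt (a * c)" by (rule real_sqrt_le_mono)
  hence bb: "\<bar>b\<bar> \<le> sqrt a * sqrt c" by (simp add: real_sqrt_mult)
  have "(\<integral>\<omega>. (dotp p (X \<omega>) v + R \<omega>)\<^sup>2 \<partial>M) = a + 2 * b + c"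
    using expand[of 1] unfolding Xv_def by simp
  hence "\<bar>(\<integral>\<omega>. (dotp p (X \<omega>) v + R \<omega>)\<^sup>2 \<partial>M) - (a + c)\<bar> \<le> 2 * sqrt a * sqrt c"
    using bb by simp
  thus ?thesis using a0 unfolding a_def c_def a_eq by simp
qed

lemma W_bound:
  fixes a A s :: real and n m :: nat
  assumes a: "a > 1" and A: "A > 0" and n: "n \<ge> 1"
    and s: "s = A powr (1 / a) * real n powr (1 / (2 * a))"
    and ms: "s < real m + 1"
  shows "A * (real m + 1) powr (1 - a) \<le> sqrt (s\<^sup>2 / real n)" and "s > 0"
proof -
  have np: "real n > 0" using n by simp
  show sp: "s > 0" unfolding s using A np by simp
  have "(real m + 1) powr (1 - a) \<le> s powr (1 - a)"
    using a sp ms by (intro powr_mono2') auto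
  hence "A * (real m + 1) powr (1 - a) \<le> A * s powr (1 - a)" using A by simp
  also have "A * s powr (1 - a) = s * (A * s powr (- a))"
    using sp by (simp add: powr_diff powr_minus divide_simps)
  also have "A * s powr (- a) = 1 / sqrt (real n)"
  proof -
    have "s powr (- a) = (A powr (1 / a)) powr (- a) * (real n powr (1 / (2 * a))) powr (- a)"
      unfolding s using A np by (simp add: powr_mult)
    also have "\<dots> = A powr (- 1) * real n powr (- (1 / 2))"
    proof -
      have e: "1 / a * - a = - 1" "1 / (2 * a) * - a = - (1 / 2)" using a by (simp_all add: field_simps)
      show ?thesis unfolding powr_powr e ..
    qed
    also have "\<dots> = 1 / A * (1 / sqrt (real n))"
      using A np by (simp add: powr_minus powr_half_sqrt divide_simps)
    finally show ?thesis using A by simp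
  qed
  also have "s * (1 / sqrt (real n)) = sqrt (s\<^sup>2 / real n)"
    using sp np by (simp add: real_sqrt_divide)
  finally show "A * (real m + 1) powr (1 - a) \<le> sqrt (s\<^sup>2 / real n)" by simp
qed

lemma D_eqs:
  fixes a A u :: real
  assumes a: "a > 1" and u: "u \<ge> 1"
  shows "A * (u powr (- a) + u powr (1 - a) / (a - 1)) = A * u powr (1 - a) / u + A * u powr (1 - a) / (a - 1)"
    and "A\<^sup>2 * (u powr (- 2 * a) + u powr (1 - 2 * a) / (2 * a - 1))
         = (A * u powr (1 - a))\<^sup>2 / u\<^sup>2 + (A * u powr (1 - a))\<^sup>2 / (u * (2 * a - 1))"
proof -
  have up: "u > 0" using u by simp
  have e1: "u powr (1 - a) = u powr (- a) * u"
  proof -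
    have "u powr (1 - a) = u powr (- a + 1)" by simp
    also have "\<dots> = u powr (- a) * u powr 1" by (rule powr_add)
    finally show ?thesis using up by simp
  qed
  have e2: "(u powr (1 - a))\<^sup>2 = u powr (- 2 * a) * u\<^sup>2"
  proof -
    have "(u powr (1 - a))\<^sup>2 = u powr (1 - a) * u powr (1 - a)" by (simp add: power2_eq_square)
    also have "\<dots> = u powr ((1 - a) + (1 - a))" by (rule powr_add[symmetric])
    also have "(1 - a) + (1 - a) = - 2 * a + 2" by simp
    also have "u powr (- 2 * a + 2) = u powr (- 2 * a) * u powr 2" by (rule powr_add)
    also have "u powr 2 = u\<^sup>2" using powr_realpow[OF up, of 2] by simp
    finally show ?thesis .
  qed
  have e3: "u powr (1 - 2 * a) = u powr (- 2 * a) * u"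
  proof -
    have "u powr (1 - 2 * a) = u powr (- 2 * a + 1)" by simp
    also have "\<dots> = u powr (- 2 * a) * u powr 1" by (rule powr_add)
    finally show ?thesis using up by simp
  qed
  show "A * (u powr (- a) + u powr (1 - a) / (a - 1)) = A * u powr (1 - a) / u + A * u powr (1 - a) / (a - 1)"
    unfolding e1 using up by (simp add: field_simps)
  show "A\<^sup>2 * (u powr (- 2 * a) + u powr (1 - 2 * a) / (2 * a - 1))
         = (A * u powr (1 - a))\<^sup>2 / u\<^sup>2 + (A * u powr (1 - a))\<^sup>2 / (u * (2 * a - 1))"
    unfolding power_mult_distrib e2 e3 using up a by (simp add: field_simps power2_eq_square)
qed

lemma le_mult1: "0 \<le> x \<Longrightarrow> 1 \<le> c \<Longrightarrow> x \<le> c * (x::real)"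
  using mult_right_mono[of 1 c x] by simp

lemma det_part:
  fixes a K W D1 D2 :: real and m :: nat
  assumes a: "a > 1" and K: "K \<ge> 1" and W: "W \<ge> 0"
    and D1: "D1 \<le> W / (real m + 1) + W / (a - 1)"
    and D20: "0 \<le> D2" and D2: "D2 \<le> W\<^sup>2 / (real m + 1)\<^sup>2 + W\<^sup>2 / ((real m + 1) * (2 * a - 1))"
  shows "D1 + sqrt (2 * real m) * sqrt K * sqrt D2 \<le> K * sqrt K * ((2 * a - 1) / (a - 1) * W)"
proof -
  define u where "u = real m + 1"
  have up: "u \<ge> 1" unfolding u_def by simp
  have sK: "sqrt K \<ge> 1" using K by simp
  have KK: "K * sqrt K \<ge> sqrt K" using K sK by (simp add: mult_right_mono[of 1 K "sqrt K", simplified])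
  have KK1: "K * sqrt K \<ge> 1" using KK sK by linarith
  have am: "(2 * a - 1) / (a - 1) = 2 + 1 / (a - 1)" using a by (simp add: field_simps)
  have ia: "1 / (a - 1) > 0" using a by simp
  show ?thesis
  proof (cases "m = 0")
    case True
    hence "D1 + sqrt (2 * real m) * sqrt K * sqrt D2 = D1" by simp
    also have "\<dots> \<le> W * (1 + 1 / (a - 1))" using D1 True by (simp add: algebra_simps)
    also have "\<dots> \<le> W * (2 + 1 / (a - 1))" using W by (intro mult_left_mono) auto
    also have "\<dots> \<le> (K * sqrt K) * (W * (2 + 1 / (a - 1)))"
      using KK1 W ia by (intro le_mult1) auto
    finally show ?thesis unfolding am by (simp add: algebra_simps)
  next
    case False
    hence u2: "u \<ge> 2" unfolding u_def by simp
    have "2 * real m * D2 \<le> 2 * real m * (W\<^sup>2 / u\<^sup>2 + W\<^sup>2 / u)"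
    proof -
      have "W\<^sup>2 / (u * (2 * a - 1)) \<le> W\<^sup>2 / u"
        using a up by (intro divide_left_mono) (auto simp: mult_le_cancel_left1)
      thus ?thesis using D2 unfolding u_def[symmetric] by (intro mult_left_mono) auto
    qed
    also have "\<dots> = W\<^sup>2 * (2 * (u - 1) * (u + 1) / u\<^sup>2)"
    proof -
      have mu: "real m = u - 1" by (simp add: u_def)
      show ?thesis unfolding mu using up by (simp add: field_simps power2_eq_square)
    qed
    also have "\<dots> \<le> W\<^sup>2 * 2"
    proof -
      have "2 * (u - 1) * (u + 1) / u\<^sup>2 \<le> 2" using up by (simp add: field_simps power2_eq_square)
      thus ?thesis by (intro mult_left_mono) auto
    qed
    finally have "sqrt (2 * real m * D2) \<le> sqrt (W\<^sup>2 * 2)" by (rule real_sqrt_le_mono)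
    hence s2: "sqrt (2 * real m) * sqrt D2 \<le> W * sqrt 2" using W by (simp add: real_sqrt_mult)
    have "D1 \<le> W / 2 + W / (a - 1)"
    proof -
      have "W / u \<le> W / 2" using W u2 by (intro divide_left_mono) auto
      thus ?thesis using D1 unfolding u_def by linarith
    qed
    moreover have "sqrt (2 * real m) * sqrt K * sqrt D2 \<le> sqrt K * (W * sqrt 2)"
      using s2 sK by (simp add: mult.commute mult.left_commute mult_left_mono)
    ultimately have "D1 + sqrt (2 * real m) * sqrt K * sqrt D2 \<le> W / 2 + W / (a - 1) + sqrt K * (W * sqrt 2)"
      by linarith
    also have "\<dots> \<le> (K * sqrt K) * (W / 2) + (K * sqrt K) * (W / (a - 1)) + (K * sqrt K) * (W * sqrt 2)"
    proof -
      have "W / 2 \<le> (K * sqrt K) * (W / 2)" using KK1 W by (intro le_mult1) auto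
      moreover have "W / (a - 1) \<le> (K * sqrt K) * (W / (a - 1))"
        using KK1 W a by (intro le_mult1) auto
      moreover have "sqrt K * (W * sqrt 2) \<le> (K * sqrt K) * (W * sqrt 2)"
        using KK W by (intro mult_right_mono) auto
      ultimately show ?thesis by linarith
    qed
    also have "\<dots> = (K * sqrt K) * (W * (1 / 2 + sqrt 2 + 1 / (a - 1)))" by (simp add: algebra_simps)
    also have "\<dots> \<le> (K * sqrt K) * (W * (2 + 1 / (a - 1)))"
    proof -
      have "sqrt 2 \<le> 3 / 2"
        by (rule real_le_lsqrt) (auto simp: power2_eq_square)
      hence "W * (1 / 2 + sqrt 2 + 1 / (a - 1)) \<le> W * (2 + 1 / (a - 1))" using W by (intro mult_left_mono) auto
      thus ?thesis by (rule mult_left_mono) (use KK1 in auto)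
    qed
    finally show ?thesis unfolding am by (simp add: algebra_simps)
  qed
qed

lemma rayleigh_bounds:
  assumes p: "p \<ge> 1" and sym: "\<forall>j<p. \<forall>k<p. S j k = S k j"
    and ev: "\<forall>\<mu>. is_eigenvalue p S \<mu> \<longrightarrow> kl \<le> \<mu> \<and> \<mu> \<le> ku"
  shows "\<forall>v. kl * n2 p v \<le> Qf p S v \<and> Qf p S v \<le> ku * n2 p v"
proof -
  obtain \<mu> where e1: "is_eigenvalue p S \<mu>" and b1: "\<forall>v. \<mu> * n2 p v \<le> Qf p S v"
    using rayleigh_min[OF p sym] by blast
  have sym2: "\<forall>j<p. \<forall>k<p. - S j k = - S k j" using sym by simp
  obtain \<nu> where e2: "is_eigenvalue p (\<lambda>j k. - S j k) \<nu>" and b2: "\<forall>v. \<nu> * n2 p v \<le> Qf p (\<lambda>j k. - S j k) v"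
    using rayleigh_min[OF p sym2] by blast
  have e2': "is_eigenvalue p S (- \<nu>)"
  proof -
    obtain w where "\<exists>j<p. w j \<noteq> 0" "\<forall>j<p. (\<Sum>k<p. - S j k * w k) = \<nu> * w j"
      using e2 unfolding is_eigenvalue_def by blast
    moreover have "(\<Sum>k<p. - S j k * w k) = - (\<Sum>k<p. S j k * w k)" for j by (simp add: sum_negf)
    ultimately show ?thesis unfolding is_eigenvalue_def by (intro exI[of _ w]) auto
  qed
  have n2nn: "n2 p v \<ge> 0" for v unfolding n2_def by (simp add: sum_nonneg)
  have Qneg: "Qf p (\<lambda>j k. - S j k) v = - Qf p S v" for v unfolding Qf_def by (simp add: sum_negf)
  show ?thesis
  proof (intro allI conjI)
    fix v
    have "kl * n2 p v \<le> \<mu> * n2 p v" using ev e1 n2nn by (intro mult_right_mono) auto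
    thus "kl * n2 p v \<le> Qf p S v" using b1 by (meson order_trans)
    have "- \<nu> * n2 p v \<le> ku * n2 p v" using ev e2' n2nn by (intro mult_right_mono) auto
    moreover have "\<nu> * n2 p v \<le> - Qf p S v" using b2 Qneg by metis
    ultimately show "Qf p S v \<le> ku * n2 p v" by linarith
  qed
qed

lemma sqrt_ineq:
  fixes X Y \<sigma> :: real
  assumes "X \<ge> 0" "Y \<ge> 0" "\<sigma> \<ge> 0" "X\<^sup>2 - 2 * \<sigma> * X \<le> Y\<^sup>2 + 2 * \<sigma> * Y"
  shows "X \<le> Y + 2 * \<sigma>"
proof (rule ccontr)
  assume "\<not> ?thesis"
  hence h: "X - \<sigma> > Y + \<sigma>" by simp
  have "Y + \<sigma> \<ge> 0" using assms by simp
  hence "(Y + \<sigma>)\<^sup>2 < (X - \<sigma>)\<^sup>2" using h by (intro power_strict_mono) auto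
  thus False using assms(4) by (simp add: power2_eq_square algebra_simps)
qed

lemma dotp_diff: "dotp p u v - dotp p u w = dotp p u (\<lambda>j. v j - w j)"
  unfolding dotp_def by (simp add: sum_subtractf algebra_simps)

lemma dotp_abs: "\<bar>dotp p u v\<bar> \<le> supnorm p u * (\<Sum>j<p. \<bar>v j\<bar>)"
proof (cases "p = 0")
  case True thus ?thesis by (simp add: dotp_def supnorm_def)
next
  case False
  have le: "\<bar>u j\<bar> \<le> supnorm p u" if "j < p" for j
    unfolding supnorm_def using False that by (auto intro: Max_ge)
  have "\<bar>dotp p u v\<bar> \<le> (\<Sum>j<p. \<bar>u j * v j\<bar>)" unfolding dotp_def by (rule sum_abs)
  also have "\<dots> \<le> (\<Sum>j<p. supnorm p u * \<bar>v j\<bar>)"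
    by (intro sum_mono) (auto simp: abs_mult intro: mult_right_mono le)
  finally show ?thesis by (simp add: sum_distrib_left)
qed

lemma l1_bound:
  fixes \<theta> \<beta> :: "nat \<Rightarrow> real"
  assumes T: "T \<subseteq> {..<p}" "card T \<le> m" and B: "card {j. j < p \<and> \<beta> j \<noteq> 0} \<le> m"
  shows "(\<Sum>j<p. \<bar>\<theta> j - \<beta> j\<bar>) \<le> (\<Sum>j\<in>{..<p}-T. \<bar>\<theta> j\<bar>) + sqrt (2 * real m) * sqrt (\<Sum>j<p. (\<theta> j - \<beta> j)\<^sup>2)"
proof -
  define B where "B = {j. j < p \<and> \<beta> j \<noteq> 0}"
  define U where "U = T \<union> B"
  have U: "U \<subseteq> {..<p}" unfolding U_def B_def using T by auto
  have fU: "finite U" using U finite_subset by blast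
  have cU: "card U \<le> 2 * m"
  proof -
    have "card U \<le> card T + card B" unfolding U_def by (rule card_Un_le)
    thus ?thesis using T B unfolding B_def by simp
  qed
  have split: "(\<Sum>j<p. \<bar>\<theta> j - \<beta> j\<bar>) = (\<Sum>j\<in>U. \<bar>\<theta> j - \<beta> j\<bar>) + (\<Sum>j\<in>{..<p}-U. \<bar>\<theta> j - \<beta> j\<bar>)"
    using U by (metis add.commute finite_lessThan sum.subset_diff)
  have out: "(\<Sum>j\<in>{..<p}-U. \<bar>\<theta> j - \<beta> j\<bar>) \<le> (\<Sum>j\<in>{..<p}-T. \<bar>\<theta> j\<bar>)"
  proof -
    have "(\<Sum>j\<in>{..<p}-U. \<bar>\<theta> j - \<beta> j\<bar>) = (\<Sum>j\<in>{..<p}-U. \<bar>\<theta> j\<bar>)"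
      by (intro sum.cong) (auto simp: U_def B_def)
    also have "\<dots> \<le> (\<Sum>j\<in>{..<p}-T. \<bar>\<theta> j\<bar>)"
      by (intro sum_mono2) (auto simp: U_def)
    finally show ?thesis .
  qed
  have inn: "(\<Sum>j\<in>U. \<bar>\<theta> j - \<beta> j\<bar>) \<le> sqrt (2 * real m) * sqrt (\<Sum>j<p. (\<theta> j - \<beta> j)\<^sup>2)"
  proof -
    have cs: "(\<Sum>j\<in>U. 1 * \<bar>\<theta> j - \<beta> j\<bar>)\<^sup>2 \<le> (\<Sum>j\<in>U. 1\<^sup>2) * (\<Sum>j\<in>U. \<bar>\<theta> j - \<beta> j\<bar>\<^sup>2)"
      by (rule Cauchy_Schwarz_ineq_sum)
    have h1: "(\<Sum>j\<in>U. \<bar>\<theta> j - \<beta> j\<bar>\<^sup>2) \<le> (\<Sum>j<p. (\<theta> j - \<beta> j)\<^sup>2)"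
      unfolding power2_abs using U by (intro sum_mono2) auto
    have h2: "(\<Sum>j\<in>U. (1::real)\<^sup>2) \<le> 2 * real m" using cU by simp
    have "(\<Sum>j\<in>U. (1::real)\<^sup>2) * (\<Sum>j\<in>U. \<bar>\<theta> j - \<beta> j\<bar>\<^sup>2) \<le> (2 * real m) * (\<Sum>j<p. (\<theta> j - \<beta> j)\<^sup>2)"
      by (rule mult_mono[OF h2 h1]) (auto intro: sum_nonneg)
    hence "(\<Sum>j\<in>U. \<bar>\<theta> j - \<beta> j\<bar>)\<^sup>2 \<le> (2 * real m) * (\<Sum>j<p. (\<theta> j - \<beta> j)\<^sup>2)"
      using cs by simp
    hence "sqrt ((\<Sum>j\<in>U. \<bar>\<theta> j - \<beta> j\<bar>)\<^sup>2) \<le> sqrt ((2 * real m) * (\<Sum>j<p. (\<theta> j - \<beta> j)\<^sup>2))"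
      by (rule real_sqrt_le_mono)
    thus ?thesis by (simp add: real_sqrt_mult sum_nonneg)
  qed
  show ?thesis using split out inn by linarith
qed

theorem lemma2:
  fixes M :: "'w measure"
    and x :: "nat \<Rightarrow> 'w \<Rightarrow> nat \<Rightarrow> real"
    and rho h :: "nat \<Rightarrow> 'w \<Rightarrow> real"
    and \<theta> \<beta>0 :: "nat \<Rightarrow> real"
    and S :: "nat \<Rightarrow> nat \<Rightarrow> real"
    and n p :: nat
    and a A kl ku s :: real
  assumes "prob_space M"
    and "n \<ge> 1"
    and "\<forall>i\<in>{1..n}. \<forall>j<p. (\<lambda>\<omega>. x i \<omega> j) \<in> borel_measurable M
                          \<and> integrable M (\<lambda>\<omega>. (x i \<omega> j)\<^sup>2)"
    and "\<forall>i\<in>{1..n}. rho i \<in> borel_measurable M \<and> integrable M (\<lambda>\<omega>. (rho i \<omega>)\<^sup>2)"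
    and "\<forall>i\<in>{1..n}. \<forall>j<p. \<forall>k<p. S j k = (\<integral>\<omega>. x i \<omega> j * x i \<omega> k \<partial>M)"
    and "0 < kl"
    and "\<forall>\<mu>. is_eigenvalue p S \<mu> \<longrightarrow> kl \<le> \<mu> \<and> \<mu> \<le> ku"
    and "\<forall>i\<in>{1..n}. \<forall>\<omega>. h i \<omega> = dotp p (x i \<omega>) \<theta> + rho i \<omega>"
    and "a > 1" and "A > 0"
    and "\<theta> \<in> smooth_class a A p"
    and "\<forall>i\<in>{1..n}. \<forall>i'\<in>{1..n}.
           (\<integral>\<omega>. (rho i \<omega>)\<^sup>2 \<partial>M) = (\<integral>\<omega>. (rho i' \<omega>)\<^sup>2 \<partial>M)"
    and "s = A powr (1 / a) * real n powr (1 / (2 * a))"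
    and "\<forall>j\<ge>p. \<beta>0 j = 0"
    and "real (l0norm p \<beta>0) \<le> s"
    and "\<forall>\<beta>. (\<forall>j\<ge>p. \<beta> j = 0) \<and> real (l0norm p \<beta>) \<le> s \<longrightarrow>
           (1 / real n) * (\<Sum>i=1..n. \<integral>\<omega>. (h i \<omega> - dotp p (x i \<omega>) \<beta>0)\<^sup>2 \<partial>M)
           \<le> (1 / real n) * (\<Sum>i=1..n. \<integral>\<omega>. (h i \<omega> - dotp p (x i \<omega>) \<beta>)\<^sup>2 \<partial>M)"
  shows "\<forall>i\<in>{1..n}. \<forall>\<omega>\<in>space M.
           \<bar>h i \<omega> - dotp p (x i \<omega>) \<beta>0\<bar>
           \<le> supnorm p (x i \<omega>) * (ku / kl) powr (3 / 2) *
               ((2 * a - 1) / (a - 1) * sqrt (s\<^sup>2 / real n)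
                + 5 * sqrt (s * (\<integral>\<omega>'. (rho i \<omega>')\<^sup>2 \<partial>M) / kl))
             + \<bar>rho i \<omega>\<bar>"
proof (intro ballI)
  fix i \<omega> assume i: "i \<in> {1..n}" and \<omega>: "\<omega> \<in> space M"
  have a1: "a > 1" using assms(9) .
  have A0: "A > 0" using assms(10) .
  have n1: "n \<ge> 1" using assms(2) .
  have kl0: "kl > 0" using assms(6) .
  have hx: "h i \<omega> - dotp p (x i \<omega>) \<beta>0 = dotp p (x i \<omega>) (\<lambda>j. \<theta> j - \<beta>0 j) + rho i \<omega>"
    using assms(8) i dotp_diff[of p "x i \<omega>" \<theta> \<beta>0] by (simp add: algebra_simps)
  define \<sigma>2 where "\<sigma>2 = (\<integral>\<omega>'. (rho i \<omega>')\<^sup>2 \<partial>M)"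
  define \<sigma> where "\<sigma> = sqrt \<sigma>2"
  have \<sigma>2nn: "\<sigma>2 \<ge> 0" unfolding \<sigma>2_def by (simp add: integral_nonneg_AE)
  have \<sigma>sq: "\<sigma> * \<sigma> = \<sigma>2" unfolding \<sigma>_def using \<sigma>2nn by simp
  have \<sigma>0: "\<sigma> \<ge> 0" unfolding \<sigma>_def using \<sigma>2nn by simp
  show "\<bar>h i \<omega> - dotp p (x i \<omega>) \<beta>0\<bar>
           \<le> supnorm p (x i \<omega>) * (ku / kl) powr (3 / 2) *
               ((2 * a - 1) / (a - 1) * sqrt (s\<^sup>2 / real n)
                + 5 * sqrt (s * (\<integral>\<omega>'. (rho i \<omega>')\<^sup>2 \<partial>M) / kl))
             + \<bar>rho i \<omega>\<bar>"
  proof (cases "p = 0")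
    case True
    hence "dotp p (x i \<omega>) (\<lambda>j. \<theta> j - \<beta>0 j) = 0" "supnorm p (x i \<omega>) = 0"
      by (simp_all add: dotp_def supnorm_def)
    thus ?thesis using hx by simp
  next
    case False
    hence p1: "p \<ge> 1" by simp
    have one: "1 \<in> {1..n}" using n1 by simp
    have sym: "\<forall>j<p. \<forall>k<p. S j k = S k j"
    proof (intro allI impI)
      fix j k assume "j < p" "k < p"
      hence "S j k = (\<integral>\<omega>. x 1 \<omega> j * x 1 \<omega> k \<partial>M)" "S k j = (\<integral>\<omega>. x 1 \<omega> k * x 1 \<omega> j \<partial>M)"
        using assms(5) one by blast+
      thus "S j k = S k j" by (simp add: mult.commute)
    qed
    have RB: "\<forall>v. kl * n2 p v \<le> Qf p S v \<and> Qf p S v \<le> ku * n2 p v"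
      by (rule rayleigh_bounds[OF p1 sym assms(7)])
    have klku: "kl \<le> ku"
    proof -
      obtain \<mu> where "is_eigenvalue p S \<mu>" using rayleigh_min[OF p1 sym] by blast
      thus ?thesis using assms(7) by force
    qed
    define K where "K = ku / kl"
    have K1: "K \<ge> 1" unfolding K_def using klku kl0 by simp
    have Kpow: "(ku / kl) powr (3 / 2) = K * sqrt K"
    proof -
      have "K powr (3 / 2) = K powr (1 + 1 / 2)" by simp
      also have "\<dots> = K powr 1 * K powr (1 / 2)" by (rule powr_add)
      also have "\<dots> = K * sqrt K" using K1 by (simp add: powr_half_sqrt)
      finally show ?thesis unfolding K_def .
    qed
    have sqK: "sqrt ku / sqrt kl = sqrt K" unfolding K_def by (simp add: real_sqrt_divide)
    define m where "m = nat \<lfloor>s\<rfloor>"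
    have spos: "s > 0" unfolding assms(13) using A0 n1 by simp
    have ms1: "real m \<le> s" unfolding m_def using spos by linarith
    have ms2: "s < real m + 1" unfolding m_def using spos by linarith
    have l0b: "card {j. j < p \<and> \<beta>0 j \<noteq> 0} \<le> m"
    proof -
      have "real (l0norm p \<beta>0) < real m + 1" using assms(15) ms2 by linarith
      thus ?thesis unfolding l0norm_def by simp
    qed
    obtain T where T1: "T \<subseteq> {..<p}" and T2: "card T \<le> m"
      and D1b: "(\<Sum>j\<in>{..<p}-T. \<bar>\<theta> j\<bar>) \<le> (\<Sum>k\<in>{m..<p}. A * (real k + 1) powr (- a))"
      and D2b: "(\<Sum>j\<in>{..<p}-T. (\<theta> j)\<^sup>2) \<le> (\<Sum>k\<in>{m..<p}. (A * (real k + 1) powr (- a))\<^sup>2)"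
      using perm_top[OF assms(11), of m] by blast
    define \<theta>t where "\<theta>t = (\<lambda>j. if j \<in> T then \<theta> j else 0)"
    have \<theta>t1: "\<forall>j\<ge>p. \<theta>t j = 0" using T1 unfolding \<theta>t_def by auto
    have \<theta>t2: "real (l0norm p \<theta>t) \<le> s"
    proof -
      have "l0norm p \<theta>t \<le> card T" unfolding l0norm_def \<theta>t_def
        using T1 finite_subset[OF T1] by (intro card_mono) auto
      thus ?thesis using T2 ms1 by linarith
    qed
    define \<delta> where "\<delta> = (\<lambda>j. \<theta> j - \<beta>0 j)"
    define d where "d = (\<lambda>j. \<theta> j - \<theta>t j)"
    define G where "G = (\<lambda>i' v. (\<integral>\<omega>'. (dotp p (x i' \<omega>') v + rho i' \<omega>')\<^sup>2 \<partial>M))"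
    have Geq: "(\<integral>\<omega>'. (h i' \<omega>' - dotp p (x i' \<omega>') \<beta>)\<^sup>2 \<partial>M) = G i' (\<lambda>j. \<theta> j - \<beta> j)"
      if "i' \<in> {1..n}" for i' \<beta>
    proof -
      have "(\<lambda>\<omega>'. (h i' \<omega>' - dotp p (x i' \<omega>') \<beta>)\<^sup>2) = (\<lambda>\<omega>'. (dotp p (x i' \<omega>') (\<lambda>j. \<theta> j - \<beta> j) + rho i' \<omega>')\<^sup>2)"
      proof
        fix \<omega>'
        have "h i' \<omega>' - dotp p (x i' \<omega>') \<beta> = dotp p (x i' \<omega>') (\<lambda>j. \<theta> j - \<beta> j) + rho i' \<omega>'"
          using assms(8) that dotp_diff[of p "x i' \<omega>'" \<theta> \<beta>] by (simp add: algebra_simps)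
        thus "(h i' \<omega>' - dotp p (x i' \<omega>') \<beta>)\<^sup>2 = (dotp p (x i' \<omega>') (\<lambda>j. \<theta> j - \<beta> j) + rho i' \<omega>')\<^sup>2" by simp
      qed
      thus ?thesis unfolding G_def by simp
    qed
    have qe: "\<bar>G i' v - (Qf p S v + \<sigma>2)\<bar> \<le> 2 * sqrt (Qf p S v) * \<sigma> \<and> Qf p S v \<ge> 0"
      if "i' \<in> {1..n}" for i' v
    proof -
      have r: "(\<integral>\<omega>'. (rho i' \<omega>')\<^sup>2 \<partial>M) = \<sigma>2" unfolding \<sigma>2_def using assms(12) that i by blast
      have "\<bar>(\<integral>\<omega>'. (dotp p (x i' \<omega>') v + rho i' \<omega>')\<^sup>2 \<partial>M) - (Qf p S v + (\<integral>\<omega>'. (rho i' \<omega>')\<^sup>2 \<partial>M))\<bar>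
           \<le> 2 * sqrt (Qf p S v) * sqrt (\<integral>\<omega>'. (rho i' \<omega>')\<^sup>2 \<partial>M) \<and> Qf p S v \<ge> 0"
        using that assms(3,4,5) by (intro quad_expand) auto
      thus ?thesis unfolding r G_def \<sigma>_def .
    qed
    have opt: "(\<Sum>i'=1..n. G i' \<delta>) \<le> (\<Sum>i'=1..n. G i' d)"
    proof -
      have "(1 / real n) * (\<Sum>i'=1..n. \<integral>\<omega>'. (h i' \<omega>' - dotp p (x i' \<omega>') \<beta>0)\<^sup>2 \<partial>M)
           \<le> (1 / real n) * (\<Sum>i'=1..n. \<integral>\<omega>'. (h i' \<omega>' - dotp p (x i' \<omega>') \<theta>t)\<^sup>2 \<partial>M)"
        using assms(16) \<theta>t1 \<theta>t2 by blast
      moreover have "(\<Sum>i'=1..n. \<integral>\<omega>'. (h i' \<omega>' - dotp p (x i' \<omega>') \<beta>0)\<^sup>2 \<partial>M) = (\<Sum>i'=1..n. G i' \<delta>)"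
        unfolding \<delta>_def by (intro sum.cong refl Geq) auto
      moreover have "(\<Sum>i'=1..n. \<integral>\<omega>'. (h i' \<omega>' - dotp p (x i' \<omega>') \<theta>t)\<^sup>2 \<partial>M) = (\<Sum>i'=1..n. G i' d)"
        unfolding d_def by (intro sum.cong refl Geq) auto
      ultimately show ?thesis using n1 by (simp add: divide_simps)
    qed
    have Qd0: "Qf p S \<delta> \<ge> 0" "Qf p S d \<ge> 0" using qe[OF one] by auto
    have low: "real n * (Qf p S \<delta> + \<sigma>2 - 2 * sqrt (Qf p S \<delta>) * \<sigma>) \<le> (\<Sum>i'=1..n. G i' \<delta>)"
    proof -
      have "(\<Sum>i'=1..n. Qf p S \<delta> + \<sigma>2 - 2 * sqrt (Qf p S \<delta>) * \<sigma>) \<le> (\<Sum>i'=1..n. G i' \<delta>)"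
      proof (intro sum_mono)
        fix i' assume "i' \<in> {1..n}"
        hence "\<bar>G i' \<delta> - (Qf p S \<delta> + \<sigma>2)\<bar> \<le> 2 * sqrt (Qf p S \<delta>) * \<sigma>" using qe by blast
        thus "Qf p S \<delta> + \<sigma>2 - 2 * sqrt (Qf p S \<delta>) * \<sigma> \<le> G i' \<delta>" unfolding abs_le_iff by linarith
      qed
      thus ?thesis by simp
    qed
    have upp: "(\<Sum>i'=1..n. G i' d) \<le> real n * (Qf p S d + \<sigma>2 + 2 * sqrt (Qf p S d) * \<sigma>)"
    proof -
      have "(\<Sum>i'=1..n. G i' d) \<le> (\<Sum>i'=1..n. Qf p S d + \<sigma>2 + 2 * sqrt (Qf p S d) * \<sigma>)"
      proof (intro sum_mono)
        fix i' assume "i' \<in> {1..n}"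
        hence "\<bar>G i' d - (Qf p S d + \<sigma>2)\<bar> \<le> 2 * sqrt (Qf p S d) * \<sigma>" using qe by blast
        thus "G i' d \<le> Qf p S d + \<sigma>2 + 2 * sqrt (Qf p S d) * \<sigma>" unfolding abs_le_iff by linarith
      qed
      thus ?thesis by simp
    qed
    have "Qf p S \<delta> + \<sigma>2 - 2 * sqrt (Qf p S \<delta>) * \<sigma> \<le> Qf p S d + \<sigma>2 + 2 * sqrt (Qf p S d) * \<sigma>"
    proof -
      have "real n * (Qf p S \<delta> + \<sigma>2 - 2 * sqrt (Qf p S \<delta>) * \<sigma>) \<le> real n * (Qf p S d + \<sigma>2 + 2 * sqrt (Qf p S d) * \<sigma>)"
        using low opt upp by linarith
      thus ?thesis using n1 by simp
    qed
    hence "(sqrt (Qf p S \<delta>))\<^sup>2 - 2 * \<sigma> * sqrt (Qf p S \<delta>) \<le> (sqrt (Qf p S d))\<^sup>2 + 2 * \<sigma> * sqrt (Qf p S d)"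
      using Qd0 by (simp add: algebra_simps)
    hence key: "sqrt (Qf p S \<delta>) \<le> sqrt (Qf p S d) + 2 * \<sigma>"
      using \<sigma>0 Qd0 by (intro sqrt_ineq) auto
    have skl: "sqrt kl > 0" using kl0 by simp
    have n2nn: "n2 p v \<ge> 0" for v unfolding n2_def by (simp add: sum_nonneg)
    have n2\<delta>: "sqrt (n2 p \<delta>) \<le> (sqrt ku * sqrt (n2 p d) + 2 * \<sigma>) / sqrt kl"
    proof -
      have "kl * n2 p \<delta> \<le> Qf p S \<delta>" using RB by blast
      hence "sqrt (kl * n2 p \<delta>) \<le> sqrt (Qf p S \<delta>)" by (rule real_sqrt_le_mono)
      hence a: "sqrt kl * sqrt (n2 p \<delta>) \<le> sqrt (Qf p S \<delta>)" by (simp add: real_sqrt_mult)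
      have "Qf p S d \<le> ku * n2 p d" using RB by blast
      hence "sqrt (Qf p S d) \<le> sqrt (ku * n2 p d)" by (rule real_sqrt_le_mono)
      hence b: "sqrt (Qf p S d) \<le> sqrt ku * sqrt (n2 p d)" by (simp add: real_sqrt_mult)
      have "sqrt kl * sqrt (n2 p \<delta>) \<le> sqrt ku * sqrt (n2 p d) + 2 * \<sigma>" using a b key by linarith
      thus ?thesis using skl by (simp add: pos_le_divide_eq mult.commute)
    qed
    define D1 where "D1 = (\<Sum>j\<in>{..<p}-T. \<bar>\<theta> j\<bar>)"
    define D2 where "D2 = (\<Sum>j\<in>{..<p}-T. (\<theta> j)\<^sup>2)"
    have nd: "n2 p d = D2"
    proof -
      have "n2 p d = (\<Sum>j<p. if j \<notin> T then (\<theta> j)\<^sup>2 else 0)"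
        unfolding n2_def d_def \<theta>t_def by (intro sum.cong) auto
      also have "\<dots> = (\<Sum>j\<in>{..<p} - T. (\<theta> j)\<^sup>2)" by (rule sum.mono_neutral_cong_right) auto
      finally show ?thesis unfolding D2_def .
    qed
    have l1: "(\<Sum>j<p. \<bar>\<delta> j\<bar>) \<le> D1 + sqrt (2 * real m) * sqrt (n2 p \<delta>)"
      using l1_bound[OF T1 T2 l0b, of \<theta>] unfolding \<delta>_def n2_def D1_def .
    define u where "u = real m + 1"
    have u1: "u \<ge> 1" unfolding u_def by simp
    define W where "W = A * u powr (1 - a)"
    have W0: "W \<ge> 0" unfolding W_def using A0 by simp
    have D1W: "D1 \<le> W / (real m + 1) + W / (a - 1)"
    proof -
      have "D1 \<le> A * (\<Sum>k\<in>{m..<p}. (real k + 1) powr (- a))"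
        using D1b unfolding D1_def by (simp add: sum_distrib_left)
      also have "\<dots> \<le> A * ((real m + 1) powr (- a) + (real m + 1) powr (1 - a) / (a - 1))"
        using A0 tail_sum[OF a1, of m p] by (intro mult_left_mono) auto
      also have "\<dots> = W / u + W / (a - 1)" unfolding W_def u_def by (rule D_eqs(1)[OF a1]) simp
      finally show ?thesis unfolding u_def .
    qed
    have D20: "D2 \<ge> 0" unfolding D2_def by (simp add: sum_nonneg)
    have D2W: "D2 \<le> W\<^sup>2 / (real m + 1)\<^sup>2 + W\<^sup>2 / ((real m + 1) * (2 * a - 1))"
    proof -
      have sqp: "(A * (real k + 1) powr (- a))\<^sup>2 = A\<^sup>2 * (real k + 1) powr (- (2 * a))" for k
      proof -
        have "((real k + 1) powr (- a))\<^sup>2 = (real k + 1) powr (- a) * (real k + 1) powr (- a)"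
          by (simp add: power2_eq_square)
        also have "\<dots> = (real k + 1) powr (- a + - a)" by (rule powr_add[symmetric])
        finally show ?thesis by (simp add: power_mult_distrib)
      qed
      have a2: "2 * a > 1" using a1 by simp
      have "D2 \<le> A\<^sup>2 * (\<Sum>k\<in>{m..<p}. (real k + 1) powr (- (2 * a)))"
        using D2b unfolding D2_def sqp by (simp add: sum_distrib_left)
      also have "\<dots> \<le> A\<^sup>2 * ((real m + 1) powr (- (2 * a)) + (real m + 1) powr (1 - 2 * a) / (2 * a - 1))"
        using tail_sum[OF a2, of m p] by (intro mult_left_mono) auto
      also have "\<dots> = W\<^sup>2 / u\<^sup>2 + W\<^sup>2 / (u * (2 * a - 1))"
        using D_eqs(2)[OF a1 u1, of A] unfolding W_def u_def by simp
      finally show ?thesis unfolding u_def .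
    qed
    have det: "D1 + sqrt (2 * real m) * sqrt K * sqrt D2 \<le> K * sqrt K * ((2 * a - 1) / (a - 1) * W)"
      by (rule det_part[OF a1 K1 W0 D1W D20 D2W])
    have Wb: "W \<le> sqrt (s\<^sup>2 / real n)" unfolding W_def u_def by (rule W_bound(1)[OF a1 A0 n1 assms(13) ms2])
    have sig: "sqrt (2 * real m) * (2 * \<sigma> / sqrt kl) \<le> K * sqrt K * (5 * sqrt (s * \<sigma>2 / kl))"
    proof -
      have e: "sqrt (s * \<sigma>2 / kl) = sqrt s * \<sigma> / sqrt kl" unfolding \<sigma>_def by (simp add: real_sqrt_mult real_sqrt_divide)
      have "sqrt (2 * real m) \<le> sqrt 2 * sqrt s" using ms1 by (simp add: real_sqrt_mult[symmetric])
      moreover have "sqrt 2 \<le> 3 / 2" by (rule real_le_lsqrt) (auto simp: power2_eq_square)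
      ultimately have "sqrt (2 * real m) \<le> 3 / 2 * sqrt s" using spos
        by (meson mult_right_mono order_trans real_sqrt_ge_zero less_imp_le)
      hence "sqrt (2 * real m) * (2 * \<sigma> / sqrt kl) \<le> (3 / 2 * sqrt s) * (2 * \<sigma> / sqrt kl)"
        using \<sigma>0 skl by (intro mult_right_mono) auto
      also have "\<dots> = 3 * (sqrt s * \<sigma> / sqrt kl)" by simp
      also have "\<dots> \<le> 5 * (sqrt s * \<sigma> / sqrt kl)" using \<sigma>0 skl spos by (intro mult_right_mono) auto
      also have "\<dots> \<le> K * sqrt K * (5 * (sqrt s * \<sigma> / sqrt kl))"
      proof -
        have "1 \<le> sqrt K" using K1 by simp
        hence "1 * 1 \<le> K * sqrt K" using K1 by (intro mult_mono) auto
        thus ?thesis using \<sigma>0 skl spos by (intro le_mult1) auto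
      qed
      finally show ?thesis unfolding e .
    qed
    have KK0: "K * sqrt K \<ge> 0" using K1 by simp
    have main: "(\<Sum>j<p. \<bar>\<delta> j\<bar>) \<le> K * sqrt K * ((2 * a - 1) / (a - 1) * sqrt (s\<^sup>2 / real n) + 5 * sqrt (s * \<sigma>2 / kl))"
    proof -
      have "sqrt (2 * real m) * sqrt (n2 p \<delta>) \<le> sqrt (2 * real m) * ((sqrt ku * sqrt (n2 p d) + 2 * \<sigma>) / sqrt kl)"
        using n2\<delta> by (intro mult_left_mono) auto
      also have "\<dots> = sqrt (2 * real m) * sqrt K * sqrt D2 + sqrt (2 * real m) * (2 * \<sigma> / sqrt kl)"
        using sqK[symmetric] nd by (simp add: add_divide_distrib algebra_simps)
      finally have "(\<Sum>j<p. \<bar>\<delta> j\<bar>) \<le> (D1 + sqrt (2 * real m) * sqrt K * sqrt D2) + sqrt (2 * real m) * (2 * \<sigma> / sqrt kl)"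
        using l1 by linarith
      also have "\<dots> \<le> K * sqrt K * ((2 * a - 1) / (a - 1) * W) + K * sqrt K * (5 * sqrt (s * \<sigma>2 / kl))"
        using det sig by linarith
      also have "K * sqrt K * ((2 * a - 1) / (a - 1) * W) \<le> K * sqrt K * ((2 * a - 1) / (a - 1) * sqrt (s\<^sup>2 / real n))"
        using Wb a1 KK0 by (intro mult_left_mono) auto
      finally show ?thesis by (simp add: algebra_simps)
    qed
    have sn0: "supnorm p (x i \<omega>) \<ge> 0"
    proof -
      have "\<bar>x i \<omega> 0\<bar> \<le> (MAX j\<in>{..<p}. \<bar>x i \<omega> j\<bar>)" using p1 by (intro Max_ge) auto
      hence "0 \<le> (MAX j\<in>{..<p}. \<bar>x i \<omega> j\<bar>)" by (meson abs_ge_zero order_trans)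
      thus ?thesis unfolding supnorm_def using p1 by simp
    qed
    have "\<bar>h i \<omega> - dotp p (x i \<omega>) \<beta>0\<bar> \<le> \<bar>dotp p (x i \<omega>) \<delta>\<bar> + \<bar>rho i \<omega>\<bar>"
      unfolding hx \<delta>_def by (rule abs_triangle_ineq)
    also have "\<dots> \<le> supnorm p (x i \<omega>) * (\<Sum>j<p. \<bar>\<delta> j\<bar>) + \<bar>rho i \<omega>\<bar>"
      using dotp_abs[of p "x i \<omega>" \<delta>] by linarith
    also have "\<dots> \<le> supnorm p (x i \<omega>) * (K * sqrt K * ((2 * a - 1) / (a - 1) * sqrt (s\<^sup>2 / real n) + 5 * sqrt (s * \<sigma>2 / kl))) + \<bar>rho i \<omega>\<bar>"
      by (intro add_right_mono mult_left_mono main sn0)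
    finally show ?thesis unfolding Kpow \<sigma>2_def[symmetric] by (simp only: mult.assoc)
  qed
qed

end
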